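(* Let $\Sigma$ be an alphabet. The set $\mathrm{RevL}(\mathbb{F}_2,\Sigma)$ is closed under the Boolean operations (complementation in $\Sigma^*$, finite intersection and finite union).
   Context: $\mathbb{F}_2$ is the two-element field. For a semiring $S$ and finite nonempty alphabet $\Sigma$, a series is a map $r\colon\Sigma^*\to S$ with value $(r,w)$ and support $\mathrm{supp}(r)=\{w\mid(r,w)\neq0\}$. A weighted automaton over $S$ and $\Sigma$ is $\mathcal{A}=(Q,\sigma,\iota,\tau)$ with $Q$ finite, $\sigma\colon Q\times\Sigma\times Q\to S$, $\iota,\tau\colon Q\to S$; a run on $w=a_1\cdots a_t$ is $q_0a_1q_1\cdots a_tq_t$ with all $\sigma(q_{k-1},a_k,q_k)\neq0$, of weight $\iota(q_0)\sigma(q_0,a_1,q_1)\cdots\sigma(q_{t-1},a_t,q_t)\tau(q_t)$, and $(\|\mathcal{A}\|,w)$ is the sum of weights of all runs on $w$. $\mathcal{A}$ is reversible if for all $p,p',q,q'\in Q$, $a\in\Sigma$: $\sigma(p,a,q)\neq0\neq\sigma(p,a,q')$ implies $q=q'$, and $\sigma(p,a,q)\neq0\neq\sigma(p',a,q)$ implies $p=p'$. $\mathrm{RevL}(S,\Sigma)$ is the set of supports of series realised by reversible weighted automata over $S$ and $\Sigma$. *)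

theory Defs
  imports Main "HOL-Library.Z2"
begin

text \<open>The two-element field F_2 is the type bit from HOL-Library.Z2.\<close>

record ('a, 's) wautomaton =
  states :: "nat set"
  trans  :: "nat \<Rightarrow> 'a \<Rightarrow> nat \<Rightarrow> 's"
  init   :: "nat \<Rightarrow> 's"
  fin    :: "nat \<Rightarrow> 's"

definition wa_wf :: "('a, 's) wautomaton \<Rightarrow> bool" where
  "wa_wf A \<longleftrightarrow> finite (states A)"

definition runs :: "('a, 's::zero) wautomaton \<Rightarrow> 'a list \<Rightarrow> nat list set" where
  "runs A w = {qs. length qs = Suc (length w) \<and> set qs \<subseteq> states A \<and>
      (\<forall>k < length w. trans A (qs ! k) (w ! k) (qs ! Suc k) \<noteq> 0)}"

definition run_weight :: "('a, 's::semiring_1) wautomaton \<Rightarrow> 'a list \<Rightarrow> nat list \<Rightarrow> 's" where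
  "run_weight A w qs = init A (qs ! 0) *
      prod_list (map (\<lambda>k. trans A (qs ! k) (w ! k) (qs ! Suc k)) [0..<length w]) *
      fin A (qs ! length w)"

definition behaviour :: "('a, 's::semiring_1) wautomaton \<Rightarrow> 'a list \<Rightarrow> 's" where
  "behaviour A w = (\<Sum>qs \<in> runs A w. run_weight A w qs)"

definition supp :: "('a list \<Rightarrow> 's::zero) \<Rightarrow> 'a list set" where
  "supp r = {w. r w \<noteq> 0}"

definition reversible :: "('a, 's::zero) wautomaton \<Rightarrow> bool" where
  "reversible A \<longleftrightarrow>
    (\<forall>p\<in>states A. \<forall>q\<in>states A. \<forall>q'\<in>states A. \<forall>a.
        trans A p a q \<noteq> 0 \<and> trans A p a q' \<noteq> 0 \<longrightarrow> q = q') \<and>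
    (\<forall>p\<in>states A. \<forall>p'\<in>states A. \<forall>q\<in>states A. \<forall>a.
        trans A p a q \<noteq> 0 \<and> trans A p' a q \<noteq> 0 \<longrightarrow> p = p')"

text \<open>RevL(S, Sigma): supports of series realised by reversible weighted automata
  over S; the alphabet Sigma is the (finite) type 'a, S is the type 's.\<close>
definition RevL :: "('a::finite list \<Rightarrow> 's::semiring_1) itself \<Rightarrow> 'a list set set" where
  "RevL _ = {supp (behaviour A) | A :: ('a, 's) wautomaton. wa_wf A \<and> reversible A}"

end

theory Submission
  imports Defs "HOL-Library.Nat_Bijection"
begin

declare bit_not_zero_iff[simp del] mult_bit_eq_and[simp del] add_bit_eq_xor[simp del]

lemma nth_in_states: "set qs \<subseteq> S \<Longrightarrow> length qs = Suc n \<Longrightarrow> k \<le> n \<Longrightarrow> qs ! k \<in> S"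
  by (metis le_imp_less_Suc nth_mem subsetD)

lemma RevL_iff: "L \<in> RevL TYPE('a::finite list \<Rightarrow> bit) \<longleftrightarrow>
  (\<exists>A :: ('a, bit) wautomaton. wa_wf A \<and> reversible A \<and> L = supp (behaviour A))"
  unfolding RevL_def by auto

lemma finite_runs: "finite (states A) \<Longrightarrow> finite (runs A w)"
proof -
  assume "finite (states A)"
  hence "finite {qs. set qs \<subseteq> states A \<and> length qs = Suc (length w)}"
    by (rule finite_lists_length_eq)
  thus ?thesis by (rule rev_finite_subset) (auto simp: runs_def)
qed

lemma empty_RevL: "{} \<in> RevL TYPE('a::finite list \<Rightarrow> bit)"
proof -
  define A :: "('a, bit) wautomaton" where "A = \<lparr>states = {}, trans = (\<lambda>p a q. 0), init = (\<lambda>p. 0), fin = (\<lambda>p. 0)\<rparr>"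
  have "runs A w = {}" for w
  proof -
    { fix qs assume "qs \<in> runs A w"
      hence "length qs = Suc (length w)" "set qs \<subseteq> {}" by (auto simp: runs_def A_def)
      hence False by (cases qs) auto }
    thus ?thesis by auto
  qed
  hence "supp (behaviour A) = {}" by (simp add: supp_def behaviour_def)
  moreover have "wa_wf A" "reversible A" by (auto simp: wa_wf_def reversible_def A_def)
  ultimately show ?thesis unfolding RevL_iff by metis
qed

definition compl_wa :: "('a, bit) wautomaton \<Rightarrow> nat \<Rightarrow> ('a, bit) wautomaton" where
"compl_wa A s = \<lparr>states = insert s (states A),
   trans = (\<lambda>p a q. if p = s \<and> q = s then 1 else if p = s \<or> q = s then 0 else trans A p a q),
   init = (\<lambda>p. if p = s then 1 else init A p), fin = (\<lambda>p. if p = s then 1 else fin A p)\<rparr>"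

lemma runs_compl:
  assumes s: "s \<notin> states A"
  shows "runs (compl_wa A s) w = insert (replicate (Suc (length w)) s) (runs A w)"
proof
  show "insert (replicate (Suc (length w)) s) (runs A w) \<subseteq> runs (compl_wa A s) w"
  proof
    fix qs assume "qs \<in> insert (replicate (Suc (length w)) s) (runs A w)"
    then consider "qs = replicate (Suc (length w)) s" | "qs \<in> runs A w" by blast
    then show "qs \<in> runs (compl_wa A s) w"
    proof cases
      case 1 then show ?thesis by (auto simp: runs_def compl_wa_def nth_Cons split: nat.splits)
    next
      case 2
      hence len: "length qs = Suc (length w)" and st: "set qs \<subseteq> states A"
        and tr: "\<forall>k < length w. trans A (qs ! k) (w ! k) (qs ! Suc k) \<noteq> 0"
        by (auto simp: runs_def)
      have ns: "qs ! k \<noteq> s" if "k \<le> length w" for k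
        using nth_in_states[OF st len that] s by auto
      show ?thesis using len st tr ns by (auto simp: runs_def compl_wa_def)
    qed
  qed
next
  show "runs (compl_wa A s) w \<subseteq> insert (replicate (Suc (length w)) s) (runs A w)"
  proof
    fix qs assume q: "qs \<in> runs (compl_wa A s) w"
    hence len: "length qs = Suc (length w)" and st: "set qs \<subseteq> insert s (states A)"
      and tr: "\<And>k. k < length w \<Longrightarrow> trans (compl_wa A s) (qs ! k) (w ! k) (qs ! Suc k) \<noteq> 0"
      by (auto simp: runs_def compl_wa_def)
    have step: "(qs ! k = s) = (qs ! Suc k = s)" if "k < length w" for k
      using tr[OF that] by (auto simp: compl_wa_def split: if_splits)
    have all: "(qs ! k = s) = (qs ! 0 = s)" if "k \<le> length w" for k
      using that
    proof (induction k)
      case 0 then show ?case by simp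
    next
      case (Suc k) then show ?case using step[of k] by simp
    qed
    show "qs \<in> insert (replicate (Suc (length w)) s) (runs A w)"
    proof (cases "qs ! 0 = s")
      case True
      have "qs = replicate (Suc (length w)) s"
        by (rule nth_equalityI) (use len all True in \<open>auto simp del: replicate_Suc\<close>)
      thus ?thesis by simp
    next
      case False
      have ns: "qs ! k \<noteq> s" if "k \<le> length w" for k using all[OF that] False by simp
      have "set qs \<subseteq> states A"
      proof
        fix x assume "x \<in> set qs"
        then obtain k where "k < length qs" "qs ! k = x" by (auto simp: in_set_conv_nth)
        thus "x \<in> states A" using ns[of k] len st nth_mem[of k qs] by (metis insertE less_Suc_eq_le subsetD)
      qed
      moreover have "\<forall>k < length w. trans A (qs ! k) (w ! k) (qs ! Suc k) \<noteq> 0"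
        using tr ns by (auto simp: compl_wa_def)
      ultimately show ?thesis using len by (simp add: runs_def)
    qed
  qed
qed

lemma prod_list_map_one: "prod_list (map (\<lambda>k. 1) xs) = (1::'b::monoid_mult)"
  by (induction xs) simp_all

lemma behaviour_compl:
  assumes s: "s \<notin> states A" and fin: "finite (states A)"
  shows "behaviour (compl_wa A s) w = 1 + behaviour A w"
proof -
  define R where "R = replicate (Suc (length w)) s"
  have nr: "R \<notin> runs A w" using s by (auto simp: runs_def R_def)
  have Rk: "R ! k = s" if "k \<le> length w" for k
    using that unfolding R_def by (simp only: nth_replicate le_imp_less_Suc)
  have "map (\<lambda>k. trans (compl_wa A s) (R ! k) (w ! k) (R ! Suc k)) [0..<length w] = map (\<lambda>k. 1) [0..<length w]"
    by (rule map_cong) (simp_all add: Rk compl_wa_def)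
  hence rw1: "run_weight (compl_wa A s) w R = 1"
    unfolding run_weight_def by (simp only: prod_list_map_one) (simp add: Rk compl_wa_def)
  have rw2: "run_weight (compl_wa A s) w qs = run_weight A w qs" if "qs \<in> runs A w" for qs
  proof -
    from that have len: "length qs = Suc (length w)" and st: "set qs \<subseteq> states A"
      by (auto simp: runs_def)
    have ns: "qs ! k \<noteq> s" if "k \<le> length w" for k
      using nth_in_states[OF st len that] s by auto
    have "map (\<lambda>k. trans (compl_wa A s) (qs ! k) (w ! k) (qs ! Suc k)) [0..<length w]
        = map (\<lambda>k. trans A (qs ! k) (w ! k) (qs ! Suc k)) [0..<length w]"
      by (rule map_cong) (simp_all add: ns compl_wa_def)
    moreover have "qs ! 0 \<noteq> s" "qs ! length w \<noteq> s" using ns by simp_all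
    ultimately show ?thesis unfolding run_weight_def by (simp only:) (simp add: compl_wa_def)
  qed
  have "behaviour (compl_wa A s) w = run_weight (compl_wa A s) w R + sum (run_weight (compl_wa A s) w) (runs A w)"
    unfolding behaviour_def runs_compl[OF s] R_def[symmetric]
    by (rule sum.insert[OF finite_runs[OF fin] nr])
  also have "\<dots> = 1 + behaviour A w"
    unfolding rw1 behaviour_def by (simp add: rw2)
  finally show ?thesis .
qed

lemma compl_RevL:
  assumes "L \<in> RevL TYPE('a::finite list \<Rightarrow> bit)"
  shows "- L \<in> RevL TYPE('a list \<Rightarrow> bit)"
proof -
  obtain A :: "('a, bit) wautomaton" where A: "wa_wf A" "reversible A" "L = supp (behaviour A)"
    using assms unfolding RevL_iff by blast
  have fin: "finite (states A)" using A(1) by (simp add: wa_wf_def)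
  obtain s :: nat where s: "s \<notin> states A" using ex_new_if_finite[OF infinite_UNIV_nat fin] by blast
  have "wa_wf (compl_wa A s)" using fin by (simp add: wa_wf_def compl_wa_def)
  moreover have "reversible (compl_wa A s)"
    unfolding reversible_def
  proof (intro conjI ballI allI impI)
    fix p q q' a assume h: "p \<in> states (compl_wa A s)" "q \<in> states (compl_wa A s)" "q' \<in> states (compl_wa A s)"
      "trans (compl_wa A s) p a q \<noteq> 0 \<and> trans (compl_wa A s) p a q' \<noteq> 0"
    show "q = q'"
    proof (cases "p = s")
      case True thus ?thesis using h(4) by (simp add: compl_wa_def split: if_splits)
    next
      case False
      hence "q \<noteq> s" "q' \<noteq> s" "trans A p a q \<noteq> 0" "trans A p a q' \<noteq> 0"
        using h(4) by (simp_all add: compl_wa_def split: if_splits)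
      moreover have "p \<in> states A" "q \<in> states A" "q' \<in> states A"
        using h(1-3) False calculation(1,2) by (simp_all add: compl_wa_def)
      ultimately show ?thesis using A(2) unfolding reversible_def by blast
    qed
  next
    fix p p' q a assume h: "p \<in> states (compl_wa A s)" "p' \<in> states (compl_wa A s)" "q \<in> states (compl_wa A s)"
      "trans (compl_wa A s) p a q \<noteq> 0 \<and> trans (compl_wa A s) p' a q \<noteq> 0"
    show "p = p'"
    proof (cases "q = s")
      case True thus ?thesis using h(4) by (simp add: compl_wa_def split: if_splits)
    next
      case False
      hence "p \<noteq> s" "p' \<noteq> s" "trans A p a q \<noteq> 0" "trans A p' a q \<noteq> 0"
        using h(4) by (simp_all add: compl_wa_def split: if_splits)
      moreover have "p \<in> states A" "p' \<in> states A" "q \<in> states A"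
        using h(1-3) False calculation(1,2) by (simp_all add: compl_wa_def)
      ultimately show ?thesis using A(2) unfolding reversible_def by blast
    qed
  qed
  moreover have "supp (behaviour (compl_wa A s)) = - L"
  proof -
    have "(1 + x \<noteq> 0) = (x = 0)" for x :: bit by (cases x) auto
    thus ?thesis using A(3) by (auto simp: supp_def behaviour_compl[OF s fin])
  qed
  ultimately show ?thesis unfolding RevL_iff by metis
qed

definition pw :: "('a, bit) wautomaton \<Rightarrow> ('a, bit) wautomaton \<Rightarrow> ('a, bit) wautomaton" where
"pw A B = \<lparr>states = prod_encode ` (states A \<times> states B),
   trans = (\<lambda>x a y. trans A (fst (prod_decode x)) a (fst (prod_decode y)) *
                     trans B (snd (prod_decode x)) a (snd (prod_decode y))),
   init = (\<lambda>x. init A (fst (prod_decode x)) * init B (snd (prod_decode x))),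
   fin = (\<lambda>x. fin A (fst (prod_decode x)) * fin B (snd (prod_decode x)))\<rparr>"

definition gz :: "nat list \<times> nat list \<Rightarrow> nat list" where
"gz p = map prod_encode (zip (fst p) (snd p))"

lemma prod_list_map_mult:
  "prod_list (map (\<lambda>k. f k * g k) xs) = prod_list (map f xs) * (prod_list (map g xs) :: 'b::comm_monoid_mult)"
  by (induction xs) (auto simp: ac_simps)

lemma runs_pw: "runs (pw A B) w = gz ` (runs A w \<times> runs B w)"
proof
  show "runs (pw A B) w \<subseteq> gz ` (runs A w \<times> runs B w)"
  proof
    fix qs assume q: "qs \<in> runs (pw A B) w"
    hence len: "length qs = Suc (length w)" and st: "set qs \<subseteq> prod_encode ` (states A \<times> states B)"
      and tr: "\<And>k. k < length w \<Longrightarrow> trans (pw A B) (qs ! k) (w ! k) (qs ! Suc k) \<noteq> 0"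
      by (auto simp: runs_def pw_def)
    define xs where "xs = map (fst \<circ> prod_decode) qs"
    define ys where "ys = map (snd \<circ> prod_decode) qs"
    have "gz (xs, ys) = qs"
      by (rule nth_equalityI) (auto simp: gz_def xs_def ys_def)
    moreover have "xs \<in> runs A w" "ys \<in> runs B w"
      using len st tr by (auto simp: runs_def xs_def ys_def pw_def)
    ultimately show "qs \<in> gz ` (runs A w \<times> runs B w)" by force
  qed
next
  show "gz ` (runs A w \<times> runs B w) \<subseteq> runs (pw A B) w"
  proof
    fix qs assume "qs \<in> gz ` (runs A w \<times> runs B w)"
    then obtain xs ys where x: "xs \<in> runs A w" and y: "ys \<in> runs B w" and qs: "qs = gz (xs, ys)" by auto
    from x y have lx: "length xs = Suc (length w)" and ly: "length ys = Suc (length w)"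
      and sx: "set xs \<subseteq> states A" and sy: "set ys \<subseteq> states B"
      and tx: "\<forall>k < length w. trans A (xs ! k) (w ! k) (xs ! Suc k) \<noteq> 0"
      and ty: "\<forall>k < length w. trans B (ys ! k) (w ! k) (ys ! Suc k) \<noteq> 0"
      by (auto simp: runs_def)
    have "set qs \<subseteq> prod_encode ` (states A \<times> states B)"
      using sx sy by (auto simp: qs gz_def dest: set_zip_leftD set_zip_rightD)
    hence "set qs \<subseteq> states (pw A B)" by (simp add: pw_def)
    moreover have "length qs = Suc (length w)" using lx ly by (simp add: qs gz_def)
    moreover have "\<forall>k < length w. trans (pw A B) (qs ! k) (w ! k) (qs ! Suc k) \<noteq> 0"
      using tx ty lx ly by (auto simp: qs gz_def pw_def)
    ultimately show "qs \<in> runs (pw A B) w" by (simp add: runs_def)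
  qed
qed

lemma inj_gz: "inj_on gz (runs A w \<times> runs B w)"
proof (rule inj_onI)
  fix p p' assume p: "p \<in> runs A w \<times> runs B w" and p': "p' \<in> runs A w \<times> runs B w" and e: "gz p = gz p'"
  obtain xs ys xs' ys' where pp: "p = (xs, ys)" "p' = (xs', ys')" by (cases p, cases p')
  from p p' have l: "length xs = Suc (length w)" "length ys = Suc (length w)"
     "length xs' = Suc (length w)" "length ys' = Suc (length w)" by (auto simp: pp runs_def)
  have "(xs ! k, ys ! k) = (xs' ! k, ys' ! k)" if "k < Suc (length w)" for k
  proof -
    have "gz p ! k = gz p' ! k" using e by simp
    hence "prod_encode (xs ! k, ys ! k) = prod_encode (xs' ! k, ys' ! k)"
      using that l by (simp add: gz_def pp)
    thus ?thesis by (metis prod_encode_inverse)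
  qed
  hence "xs = xs'" "ys = ys'" using l by (auto intro!: nth_equalityI)
  thus "p = p'" by (simp add: pp)
qed

lemma rw_pw:
  assumes "length xs = Suc (length w)" "length ys = Suc (length w)"
  shows "run_weight (pw A B) w (gz (xs, ys)) = run_weight A w xs * run_weight B w ys"
proof -
  have "map (\<lambda>k. trans (pw A B) (gz (xs, ys) ! k) (w ! k) (gz (xs, ys) ! Suc k)) [0..<length w]
      = map (\<lambda>k. trans A (xs ! k) (w ! k) (xs ! Suc k) * trans B (ys ! k) (w ! k) (ys ! Suc k)) [0..<length w]"
    using assms by (auto simp: gz_def pw_def)
  moreover have "gz (xs, ys) ! 0 = prod_encode (xs ! 0, ys ! 0)"
     "gz (xs, ys) ! length w = prod_encode (xs ! length w, ys ! length w)"
    using assms by (auto simp: gz_def)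
  ultimately show ?thesis unfolding run_weight_def
    by (simp only: prod_list_map_mult) (simp add: pw_def ac_simps)
qed

lemma behaviour_pw:
  assumes "finite (states A)" "finite (states B)"
  shows "behaviour (pw A B) w = behaviour A w * behaviour B w"
proof -
  have "behaviour (pw A B) w = sum (run_weight (pw A B) w \<circ> gz) (runs A w \<times> runs B w)"
    unfolding behaviour_def runs_pw by (rule sum.reindex[OF inj_gz])
  also have "\<dots> = (\<Sum>(xs, ys) \<in> runs A w \<times> runs B w. run_weight A w xs * run_weight B w ys)"
    by (rule sum.cong) (auto simp: runs_def rw_pw)
  also have "\<dots> = behaviour A w * behaviour B w"
    unfolding behaviour_def sum_product sum.cartesian_product by simp
  finally show ?thesis .
qed

lemma inter_RevL:
  assumes "L1 \<in> RevL TYPE('a::finite list \<Rightarrow> bit)" "L2 \<in> RevL TYPE('a list \<Rightarrow> bit)"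
  shows "L1 \<inter> L2 \<in> RevL TYPE('a list \<Rightarrow> bit)"
proof -
  obtain A :: "('a, bit) wautomaton" where A: "wa_wf A" "reversible A" "L1 = supp (behaviour A)"
    using assms(1) unfolding RevL_iff by blast
  obtain B :: "('a, bit) wautomaton" where B: "wa_wf B" "reversible B" "L2 = supp (behaviour B)"
    using assms(2) unfolding RevL_iff by blast
  have fA: "finite (states A)" and fB: "finite (states B)" using A(1) B(1) by (auto simp: wa_wf_def)
  have "wa_wf (pw A B)" using fA fB by (simp add: wa_wf_def pw_def)
  moreover have "reversible (pw A B)"
  proof -
    have e: "prod_decode x = (fst (prod_decode x), snd (prod_decode x))" for x by simp
    show ?thesis using A(2) B(2) unfolding reversible_def pw_def
      apply (simp only: wautomaton.simps)
      apply (intro conjI ballI allI impI)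
      subgoal for p q q' a
        by (clarsimp, metis (no_types) mult_zero_left mult_zero_right)
      subgoal for p p' q a
        by (clarsimp, metis (no_types) mult_zero_left mult_zero_right)
      done
  qed
  moreover have "supp (behaviour (pw A B)) = L1 \<inter> L2"
    using A(3) B(3) by (auto simp: supp_def behaviour_pw[OF fA fB])
  ultimately show ?thesis unfolding RevL_iff by metis
qed


lemma UNIV_RevL: "UNIV \<in> RevL TYPE('a::finite list \<Rightarrow> bit)"
  using compl_RevL[OF empty_RevL] by simp

lemma Inter_RevL:
  assumes "finite F" "F \<subseteq> RevL TYPE('a::finite list \<Rightarrow> bit)"
  shows "\<Inter> F \<in> RevL TYPE('a list \<Rightarrow> bit)"
  using assms
proof (induction F rule: finite_induct)
  case empty then show ?case using UNIV_RevL by simp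
next
  case (insert X F) then show ?case by (simp add: inter_RevL)
qed

theorem proposition6:
  fixes L :: "'a::finite list set" and F :: "'a list set set"
  shows "(L \<in> RevL TYPE('a list \<Rightarrow> bit) \<longrightarrow> - L \<in> RevL TYPE('a list \<Rightarrow> bit))
    \<and> (finite F \<and> F \<subseteq> RevL TYPE('a list \<Rightarrow> bit) \<longrightarrow>
         \<Inter> F \<in> RevL TYPE('a list \<Rightarrow> bit) \<and> \<Union> F \<in> RevL TYPE('a list \<Rightarrow> bit))"
proof (intro conjI impI)
  show "L \<in> RevL TYPE('a list \<Rightarrow> bit) \<Longrightarrow> - L \<in> RevL TYPE('a list \<Rightarrow> bit)" by (rule compl_RevL)
next
  assume h: "finite F \<and> F \<subseteq> RevL TYPE('a list \<Rightarrow> bit)"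
  thus "\<Inter> F \<in> RevL TYPE('a list \<Rightarrow> bit)" using Inter_RevL by blast
  have "uminus ` F \<subseteq> RevL TYPE('a list \<Rightarrow> bit)" using h compl_RevL by blast
  hence "\<Inter> (uminus ` F) \<in> RevL TYPE('a list \<Rightarrow> bit)" using h Inter_RevL by blast
  hence "- \<Inter> (uminus ` F) \<in> RevL TYPE('a list \<Rightarrow> bit)" by (rule compl_RevL)
  moreover have "- \<Inter> (uminus ` F) = \<Union> F" by auto
  ultimately show "\<Union> F \<in> RevL TYPE('a list \<Rightarrow> bit)" by simp
qed

end
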